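(* Let $\alpha,p,j\ge0$ be integers, and let $b_n=2n+\alpha+1$, $\lambda_n=n(n+\alpha)$. Then $$\sum_{\omega\in\mathrm{Mot}_{p,j,j}}\mathrm{wt}_{b,\lambda}(\omega)=\big|M^{(\alpha)}_{p,j}(p)\big|.$$
   Context: Motzkin paths: a Motzkin path is a sequence $(s_0,\dots,s_n)$ of points $s_i=(x_i,y_i)\in\mathbb{Z}^2$ with all $y_i\ge0$ such that each step $(s_i,s_{i+1})$ is an East step ($s_{i+1}=s_i+(1,0)$), a North-East step ($s_{i+1}=s_i+(1,1)$) or a South-East step ($s_{i+1}=s_i+(1,-1)$); the step has height $k$ if $y_i=k$. $\mathrm{Mot}_{n,k,l}$ is the set of Motzkin paths from $(0,k)$ to $(n,l)$. Given sequences $(b_n)_{n\ge0},(\lambda_n)_{n\ge0}$, an East step of height $k$ has weight $b_k$, a North-East step weight $1$, a South-East step of height $k$ weight $\lambda_k$, and $\mathrm{wt}_{b,\lambda}(\omega)$ is the product of the step weights of $\omega$. Bipartite matchings: for integers $n,j,\alpha\ge0$, let $T_-=\{-\alpha-j,\dots,-1\}$, $T_+=\{1,\dots,n\}$ (top row), $B_-=\{-\tilde j,\dots,-\tilde 1\}$, $B_+=\{\tilde1,\dots,\tilde n\}$ (bottom row; $\tilde m$ is a formal copy of $m$). A bipartite matching on $T_-\cup T_+\cup B_-\cup B_+$ is a set partition into singletons (isolated vertices) and two-element blocks $\{a,\tilde b\}$ with $a$ in the top row and $\tilde b$ in the bottom row (edges). $M^{(\alpha)}_{n,j}$ is the set of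 such matchings having no edge $\{a,\tilde b\}$ with $a\in T_-$ and $\tilde b\in B_-$, and $M^{(\alpha)}_{n,j}(l)$ is its subset of matchings with exactly $l$ edges. *)

theory Defs
  imports Main
begin

definition motzkin_step :: "int \<times> int \<Rightarrow> int \<times> int \<Rightarrow> bool" where
  "motzkin_step s t \<longleftrightarrow>
     t = (fst s + 1, snd s) \<or> t = (fst s + 1, snd s + 1) \<or> t = (fst s + 1, snd s - 1)"

definition Mot :: "nat \<Rightarrow> nat \<Rightarrow> nat \<Rightarrow> (int \<times> int) list set" where
  "Mot n k l = {ss. length ss = n + 1 \<and> ss ! 0 = (0, int k) \<and> ss ! n = (int n, int l)
       \<and> (\<forall>i\<le>n. snd (ss ! i) \<ge> 0)
       \<and> (\<forall>i<n. motzkin_step (ss ! i) (ss ! Suc i))}"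

definition step_wt :: "(nat \<Rightarrow> 'a::comm_monoid_mult) \<Rightarrow> (nat \<Rightarrow> 'a) \<Rightarrow> int \<times> int \<Rightarrow> int \<times> int \<Rightarrow> 'a" where
  "step_wt b lam s t =
     (if snd t = snd s then b (nat (snd s))
      else if snd t = snd s + 1 then 1
      else lam (nat (snd s)))"

definition wt :: "(nat \<Rightarrow> 'a::comm_monoid_mult) \<Rightarrow> (nat \<Rightarrow> 'a) \<Rightarrow> (int \<times> int) list \<Rightarrow> 'a" where
  "wt b lam ss = (\<Prod>i<length ss - 1. step_wt b lam (ss ! i) (ss ! Suc i))"

(* Vertex sets. Top row: T_- = {-alpha-j..-1}, T_+ = {1..n};
   bottom row: B_- = {-j..-1}, B_+ = {1..n} (the tilde copies are encoded by
   the second component of an edge). *)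
definition top_row :: "nat \<Rightarrow> nat \<Rightarrow> nat \<Rightarrow> int set" where
  "top_row \<alpha> n j = {-(int \<alpha> + int j)..-1} \<union> {1..int n}"

definition bot_row :: "nat \<Rightarrow> nat \<Rightarrow> int set" where
  "bot_row n j = {-(int j)..-1} \<union> {1..int n}"

(* A bipartite matching (set partition into singletons and top-bottom pairs)
   is determined by its set of edges (a, b~), encoded as pairs (a,b);
   the remaining vertices are the singletons. *)
definition bip_matching :: "nat \<Rightarrow> nat \<Rightarrow> nat \<Rightarrow> (int \<times> int) set \<Rightarrow> bool" where
  "bip_matching \<alpha> n j E \<longleftrightarrow>
     E \<subseteq> top_row \<alpha> n j \<times> bot_row n j
     \<and> (\<forall>a b b'. (a, b) \<in> E \<longrightarrow> (a, b') \<in> E \<longrightarrow> b = b')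
     \<and> (\<forall>a a' b. (a, b) \<in> E \<longrightarrow> (a', b) \<in> E \<longrightarrow> a = a')"

definition Mset :: "nat \<Rightarrow> nat \<Rightarrow> nat \<Rightarrow> (int \<times> int) set set" where
  "Mset \<alpha> n j = {E. bip_matching \<alpha> n j E \<and> (\<forall>(a, b) \<in> E. \<not> (a < 0 \<and> b < 0))}"

definition Mset_l :: "nat \<Rightarrow> nat \<Rightarrow> nat \<Rightarrow> nat \<Rightarrow> (int \<times> int) set set" where
  "Mset_l \<alpha> n j l = {E \<in> Mset \<alpha> n j. card E = l}"

end

theory Submission imports Defs begin

definition pm :: "('a \<times> 'b) set \<Rightarrow> ('a \<times> 'b) set set" where
  "pm A = {E. E \<subseteq> A \<and> inj_on fst E \<and> inj_on snd E}"

definition pmc :: "('a \<times> 'b) set \<Rightarrow> nat \<Rightarrow> nat" where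
  "pmc A e = card {E \<in> pm A. card E = e}"

lemma pm_finite: "finite A \<Longrightarrow> finite (pm A)"
  unfolding pm_def by (rule finite_subset[of _ "Pow A"]) auto

lemma pm_top:
  assumes "x \<notin> fst ` A"
  shows "pm (A \<union> {x} \<times> Y) = pm A \<union> (\<lambda>(F,y). insert (x,y) F) ` (SIGMA F:pm A. Y - snd ` F)"
proof (rule set_eqI, rule iffI)
  fix E assume E: "E \<in> pm (A \<union> {x} \<times> Y)"
  show "E \<in> pm A \<union> (\<lambda>(F,y). insert (x,y) F) ` (SIGMA F:pm A. Y - snd ` F)"
  proof (cases "x \<in> fst ` E")
    case False
    then have "E \<subseteq> A" using E unfolding pm_def by force
    then show ?thesis using E unfolding pm_def by auto
  next
    case True
    then obtain y where xy: "(x,y) \<in> E" by force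
    define F where "F = E - {(x,y)}"
    have y: "y \<in> Y" using xy E assms unfolding pm_def by force
    have FA: "F \<subseteq> A"
    proof
      fix p assume p: "p \<in> F"
      then have "p \<in> E" "p \<noteq> (x,y)" unfolding F_def by auto
      moreover have "fst p \<noteq> x"
      proof
        assume "fst p = x"
        then have "p = (x,y)" using E xy \<open>p \<in> E\<close> unfolding pm_def inj_on_def by auto
        with \<open>p \<noteq> (x,y)\<close> show False by simp
      qed
      ultimately show "p \<in> A" using E unfolding pm_def by auto
    qed
    have Fpm: "F \<in> pm A" using FA E unfolding pm_def F_def by (auto intro: inj_on_subset)
    have "y \<notin> snd ` F"
    proof
      assume "y \<in> snd ` F"
      then obtain q where "q \<in> F" "snd q = y" by auto
      then have "q = (x,y)" using E xy unfolding pm_def inj_on_def F_def by auto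
      with \<open>q \<in> F\<close> show False unfolding F_def by simp
    qed
    moreover have "E = insert (x,y) F" using xy unfolding F_def by auto
    ultimately show ?thesis using Fpm y by force
  qed
next
  fix E assume "E \<in> pm A \<union> (\<lambda>(F,y). insert (x,y) F) ` (SIGMA F:pm A. Y - snd ` F)"
  then show "E \<in> pm (A \<union> {x} \<times> Y)"
  proof
    assume "E \<in> pm A" then show ?thesis unfolding pm_def by auto
  next
    assume "E \<in> (\<lambda>(F,y). insert (x,y) F) ` (SIGMA F:pm A. Y - snd ` F)"
    then obtain F y where F: "F \<in> pm A" and y: "y \<in> Y" "y \<notin> snd ` F" and E: "E = insert (x,y) F"
      by auto
    have "x \<notin> fst ` F" using F assms unfolding pm_def by auto
    then show ?thesis using F y E unfolding pm_def by auto
  qed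
qed

lemma pm_bot:
  assumes "y \<notin> snd ` A"
  shows "pm (A \<union> X \<times> {y}) = pm A \<union> (\<lambda>(F,x). insert (x,y) F) ` (SIGMA F:pm A. X - fst ` F)"
proof (rule set_eqI, rule iffI)
  fix E assume E: "E \<in> pm (A \<union> X \<times> {y})"
  show "E \<in> pm A \<union> (\<lambda>(F,x). insert (x,y) F) ` (SIGMA F:pm A. X - fst ` F)"
  proof (cases "y \<in> snd ` E")
    case False
    then have "E \<subseteq> A" using E unfolding pm_def by force
    then show ?thesis using E unfolding pm_def by auto
  next
    case True
    then obtain x where xy: "(x,y) \<in> E" by force
    define F where "F = E - {(x,y)}"
    have y: "x \<in> X" using xy E assms unfolding pm_def by force
    have FA: "F \<subseteq> A"
    proof
      fix p assume p: "p \<in> F"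
      then have "p \<in> E" "p \<noteq> (x,y)" unfolding F_def by auto
      moreover have "snd p \<noteq> y"
      proof
        assume "snd p = y"
        then have "p = (x,y)" using E xy \<open>p \<in> E\<close> unfolding pm_def inj_on_def by auto
        with \<open>p \<noteq> (x,y)\<close> show False by simp
      qed
      ultimately show "p \<in> A" using E unfolding pm_def by auto
    qed
    have Fpm: "F \<in> pm A" using FA E unfolding pm_def F_def by (auto intro: inj_on_subset)
    have "x \<notin> fst ` F"
    proof
      assume "x \<in> fst ` F"
      then obtain q where "q \<in> F" "fst q = x" by auto
      then have "q = (x,y)" using E xy unfolding pm_def inj_on_def F_def by auto
      with \<open>q \<in> F\<close> show False unfolding F_def by simp
    qed
    moreover have "E = insert (x,y) F" using xy unfolding F_def by auto
    ultimately show ?thesis using Fpm y by force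
  qed
next
  fix E assume "E \<in> pm A \<union> (\<lambda>(F,x). insert (x,y) F) ` (SIGMA F:pm A. X - fst ` F)"
  then show "E \<in> pm (A \<union> X \<times> {y})"
  proof
    assume "E \<in> pm A" then show ?thesis unfolding pm_def by auto
  next
    assume "E \<in> (\<lambda>(F,x). insert (x,y) F) ` (SIGMA F:pm A. X - fst ` F)"
    then obtain F x where F: "F \<in> pm A" and y: "x \<in> X" "x \<notin> fst ` F" and E: "E = insert (x,y) F"
      by auto
    have "y \<notin> snd ` F" using F assms unfolding pm_def by auto
    then show ?thesis using F y E unfolding pm_def by auto
  qed
qed

lemma pm_sub: "F \<in> pm A \<Longrightarrow> F \<subseteq> A" unfolding pm_def by auto

lemma pmc_top:
  assumes fin: "finite A" and x: "x \<notin> fst ` A" and Y: "finite Y" "snd ` A \<subseteq> Y"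
  shows "pmc (A \<union> {x} \<times> Y) (Suc e) = pmc A (Suc e) + (card Y - e) * pmc A e"
proof -
  let ?f = "(\<lambda>(F,y). insert (x,y) F)"
  let ?S = "SIGMA F:{F\<in>pm A. card F = e}. Y - snd ` F"
  have finF: "finite F" if "F \<in> pm A" for F using that fin pm_sub finite_subset by blast
  have xF: "(x,y) \<notin> F" if "F \<in> pm A" for F y using that x pm_sub by force
  have eq: "{E\<in>pm (A \<union> {x} \<times> Y). card E = Suc e} = {E\<in>pm A. card E = Suc e} \<union> ?f ` ?S"
    unfolding pm_top[OF x] using finF xF by (auto simp: card_insert_if)
  have disj: "{E\<in>pm A. card E = Suc e} \<inter> ?f ` ?S = {}"
    using xF pm_sub by fastforce
  have inj: "inj_on ?f ?S"
  proof (rule inj_onI, clarsimp)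
    fix F y F' y'
    assume F: "F \<in> pm A" "y \<in> Y" "y \<notin> snd ` F" and F': "F' \<in> pm A" "y' \<in> Y" "y' \<notin> snd ` F'"
      and e: "insert (x, y) F = insert (x, y') F'"
    have "(x,y) \<in> insert (x,y') F'" using e by auto
    then have yy: "y = y'" using xF[OF F'(1)] by auto
    have "F = insert (x, y) F - {(x,y)}" using xF[OF F(1)] by auto
    also have "\<dots> = F'" using e xF[OF F'(1)] yy by auto
    finally show "F = F' \<and> y = y'" using yy by simp
  qed
  have finS: "finite ?S" using pm_finite[OF fin] Y by auto
  have cS: "card ?S = (card Y - e) * pmc A e"
  proof -
    have "card ?S = (\<Sum>F\<in>{F\<in>pm A. card F = e}. card (Y - snd ` F))"
      by (rule card_SigmaI) (use pm_finite[OF fin] Y in auto)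
    also have "\<dots> = (\<Sum>F\<in>{F\<in>pm A. card F = e}. card Y - e)"
    proof (rule sum.cong[OF refl])
      fix F assume F: "F \<in> {F\<in>pm A. card F = e}"
      then have "inj_on snd F" unfolding pm_def by auto
      then have "card (snd ` F) = e" using F card_image by fastforce
      moreover have "snd ` F \<subseteq> Y" using F Y pm_sub by blast
      ultimately show "card (Y - snd ` F) = card Y - e" using Y(1)
        by (simp add: card_Diff_subset finite_subset)
    qed
    also have "\<dots> = (card Y - e) * pmc A e" unfolding pmc_def by simp
    finally show ?thesis .
  qed
  have "pmc (A \<union> {x} \<times> Y) (Suc e) = card ({E\<in>pm A. card E = Suc e} \<union> ?f ` ?S)"
    unfolding pmc_def eq ..
  also have "\<dots> = pmc A (Suc e) + card (?f ` ?S)"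
    unfolding pmc_def
    by (rule card_Un_disjoint) (use pm_finite[OF fin] finS disj in auto)
  also have "card (?f ` ?S) = card ?S" by (rule card_image[OF inj])
  finally show ?thesis using cS by simp
qed

lemma pmc_top0:
  assumes fin: "finite A" and x: "x \<notin> fst ` A" and Y: "finite Y"
  shows "pmc (A \<union> {x} \<times> Y) 0 = pmc A 0"
proof -
  have "{E\<in>pm (A \<union> {x} \<times> Y). card E = 0} = {{}}"
  proof -
    have "finite (A \<union> {x} \<times> Y)" using fin Y by auto
    then show ?thesis unfolding pm_def by (auto dest: finite_subset)
  qed
  moreover have "{E\<in>pm A. card E = 0} = {{}}"
    using fin unfolding pm_def by (auto dest: finite_subset)
  ultimately show ?thesis unfolding pmc_def by simp
qed

lemma pmc_bot:
  assumes fin: "finite A" and y: "y \<notin> snd ` A" and X: "finite X" "fst ` A \<subseteq> X"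
  shows "pmc (A \<union> X \<times> {y}) (Suc e) = pmc A (Suc e) + (card X - e) * pmc A e"
proof -
  let ?f = "(\<lambda>(F,x). insert (x,y) F)"
  let ?S = "SIGMA F:{F\<in>pm A. card F = e}. X - fst ` F"
  have finF: "finite F" if "F \<in> pm A" for F using that fin pm_sub finite_subset by blast
  have xF: "(x,y) \<notin> F" if "F \<in> pm A" for F x using that y pm_sub by force
  have eq: "{E\<in>pm (A \<union> X \<times> {y}). card E = Suc e} = {E\<in>pm A. card E = Suc e} \<union> ?f ` ?S"
    unfolding pm_bot[OF y] using finF xF by (auto simp: card_insert_if)
  have disj: "{E\<in>pm A. card E = Suc e} \<inter> ?f ` ?S = {}"
    using xF pm_sub by fastforce
  have inj: "inj_on ?f ?S"
  proof (rule inj_onI, clarsimp)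
    fix F x F' x'
    assume F: "F \<in> pm A" "x \<in> X" "x \<notin> fst ` F" and F': "F' \<in> pm A" "x' \<in> X" "x' \<notin> fst ` F'"
      and e: "insert (x, y) F = insert (x', y) F'"
    have "(x,y) \<in> insert (x',y) F'" using e by auto
    then have yy: "x = x'" using xF[OF F'(1)] by auto
    have "F = insert (x, y) F - {(x,y)}" using xF[OF F(1)] by auto
    also have "\<dots> = F'" using e xF[OF F'(1)] yy by auto
    finally show "F = F' \<and> x = x'" using yy by simp
  qed
  have finS: "finite ?S" using pm_finite[OF fin] X by auto
  have cS: "card ?S = (card X - e) * pmc A e"
  proof -
    have "card ?S = (\<Sum>F\<in>{F\<in>pm A. card F = e}. card (X - fst ` F))"
      by (rule card_SigmaI) (use pm_finite[OF fin] X in auto)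
    also have "\<dots> = (\<Sum>F\<in>{F\<in>pm A. card F = e}. card X - e)"
    proof (rule sum.cong[OF refl])
      fix F assume F: "F \<in> {F\<in>pm A. card F = e}"
      then have "inj_on fst F" unfolding pm_def by auto
      then have "card (fst ` F) = e" using F card_image by fastforce
      moreover have "fst ` F \<subseteq> X" using F X pm_sub by blast
      ultimately show "card (X - fst ` F) = card X - e" using X(1)
        by (simp add: card_Diff_subset finite_subset)
    qed
    also have "\<dots> = (card X - e) * pmc A e" unfolding pmc_def by simp
    finally show ?thesis .
  qed
  have "pmc (A \<union> X \<times> {y}) (Suc e) = card ({E\<in>pm A. card E = Suc e} \<union> ?f ` ?S)"
    unfolding pmc_def eq ..
  also have "\<dots> = pmc A (Suc e) + card (?f ` ?S)"
    unfolding pmc_def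
    by (rule card_Un_disjoint) (use pm_finite[OF fin] finS disj in auto)
  also have "card (?f ` ?S) = card ?S" by (rule card_image[OF inj])
  finally show ?thesis using cS by simp
qed

lemma pmc_bot0:
  assumes fin: "finite A" and X: "finite X"
  shows "pmc (A \<union> X \<times> {y}) 0 = pmc A 0"
proof -
  have "{E\<in>pm (A \<union> X \<times> {y}). card E = 0} = {{}}"
  proof -
    have "finite (A \<union> X \<times> {y})" using fin X by auto
    then show ?thesis unfolding pm_def by (auto dest: finite_subset)
  qed
  moreover have "{E\<in>pm A. card E = 0} = {{}}"
    using fin unfolding pm_def by (auto dest: finite_subset)
  ultimately show ?thesis unfolding pmc_def by simp
qed

lemma pmc_big:
  assumes fin: "finite A" "finite Y" "snd ` A \<subseteq> Y" and e: "e > card Y"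
  shows "pmc A e = 0"
proof -
  have "{E\<in>pm A. card E = e} = {}"
  proof (rule ccontr)
    assume "{E\<in>pm A. card E = e} \<noteq> {}"
    then obtain E where E: "E \<in> pm A" "card E = e" by auto
    then have "card (snd ` E) = e" unfolding pm_def using card_image by fastforce
    moreover have "snd ` E \<subseteq> Y" using E fin pm_sub by blast
    ultimately have "e \<le> card Y" using fin(2) card_mono by metis
    with e show False by simp
  qed
  then show ?thesis unfolding pmc_def by (metis card.empty)
qed

definition AA :: "nat \<Rightarrow> nat \<Rightarrow> nat \<Rightarrow> (int \<times> int) set" where
  "AA \<alpha> n j = {(a,b). a \<in> top_row \<alpha> n j \<and> b \<in> bot_row n j \<and> \<not> (a < 0 \<and> b < 0)}"
lemma fin_top: "finite (top_row \<alpha> n j)" unfolding top_row_def by auto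
lemma fin_bot: "finite (bot_row n j)" unfolding bot_row_def by auto
lemma card_bot: "card (bot_row n j) = j + n"
proof -
  have "card (bot_row n j) = card {-(int j)..-1} + card {1..int n}"
    unfolding bot_row_def by (rule card_Un_disjoint) auto
  then show ?thesis by simp
qed
lemma fin_AA: "finite (AA \<alpha> n j)"
  by (rule finite_subset[of _ "top_row \<alpha> n j \<times> bot_row n j"]) (auto simp: AA_def fin_top fin_bot)

lemma card_top1: "card (top_row \<alpha> n j \<union> {int n + 1}) = \<alpha> + j + n + 1"
proof -
  have "top_row \<alpha> n j \<union> {int n + 1} = {-(int \<alpha> + int j)..-1} \<union> {1..int n + 1}"
    unfolding top_row_def by auto
  moreover have "card ({-(int \<alpha> + int j)..-1} \<union> {1..int n + 1}) = card {-(int \<alpha> + int j)..-1} + card {1..int n + 1}"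
    by (rule card_Un_disjoint) auto
  ultimately show ?thesis by simp
qed
lemma AA_0: "AA \<alpha> 0 j = {}"
  unfolding AA_def top_row_def bot_row_def by auto
lemma AA_Suc: "AA \<alpha> (Suc n) j = (AA \<alpha> n j \<union> {int n + 1} \<times> bot_row n j) \<union> (top_row \<alpha> n j \<union> {int n + 1}) \<times> {int n + 1}"
  unfolding AA_def top_row_def bot_row_def by (rule set_eqI) (simp split: prod.splits; linarith)
lemma bip_pm: "bip_matching \<alpha> n j E \<and> (\<forall>(a, b) \<in> E. \<not> (a < 0 \<and> b < 0)) \<longleftrightarrow> E \<in> pm (AA \<alpha> n j)"
proof -
  have i1: "(\<forall>a b b'. (a, b) \<in> E \<longrightarrow> (a, b') \<in> E \<longrightarrow> b = b') \<longleftrightarrow> inj_on fst E"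
    unfolding inj_on_def by fastforce
  have i2: "(\<forall>a a' b. (a, b) \<in> E \<longrightarrow> (a', b) \<in> E \<longrightarrow> a = a') \<longleftrightarrow> inj_on snd E"
    unfolding inj_on_def by fastforce
  have i3: "(E \<subseteq> top_row \<alpha> n j \<times> bot_row n j \<and> (\<forall>(a, b) \<in> E. \<not> (a < 0 \<and> b < 0))) \<longleftrightarrow> E \<subseteq> AA \<alpha> n j"
    unfolding AA_def by blast
  show ?thesis unfolding bip_matching_def pm_def using i1 i2 i3 by blast
qed

lemma Mset_l_pm: "Mset_l \<alpha> n j e = {E \<in> pm (AA \<alpha> n j). card E = e}"
  unfolding Mset_l_def Mset_def using bip_pm by blast
definition cc :: "nat \<Rightarrow> nat \<Rightarrow> nat \<Rightarrow> nat \<Rightarrow> nat" where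
  "cc \<alpha> j n e = pmc (AA \<alpha> n j) e"

lemma sing_filter: "{E \<in> {X}. P E} = (if P X then {X} else {})" by auto

lemma cc_0: "cc \<alpha> j 0 e = (if e = 0 then 1 else 0)"
proof -
  have pe: "pm ({} :: (int \<times> int) set) = {{}}" unfolding pm_def by auto
  show ?thesis unfolding cc_def pmc_def AA_0 pe sing_filter by simp
qed

lemma cc_big: "e > j + n \<Longrightarrow> cc \<alpha> j n e = 0"
  unfolding cc_def
  by (rule pmc_big[OF fin_AA fin_bot]) (force simp: AA_def, simp add: card_bot)

definition dd :: "nat \<Rightarrow> nat \<Rightarrow> nat \<Rightarrow> nat \<Rightarrow> nat" where
  "dd \<alpha> j n = pmc (AA \<alpha> n j \<union> {int n + 1} \<times> bot_row n j)"

lemma cc_Suc: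
  shows "cc \<alpha> j (Suc n) 0 = cc \<alpha> j n 0"
    and "cc \<alpha> j (Suc n) (Suc e) = dd \<alpha> j n (Suc e) + (\<alpha> + j + n + 1 - e) * dd \<alpha> j n e"
    and "dd \<alpha> j n 0 = cc \<alpha> j n 0"
    and "dd \<alpha> j n (Suc e) = cc \<alpha> j n (Suc e) + (j + n - e) * cc \<alpha> j n e"
proof -
  have f1: "finite (AA \<alpha> n j \<union> {int n + 1} \<times> bot_row n j)" using fin_AA fin_bot by auto
  have nt: "int n + 1 \<notin> top_row \<alpha> n j" unfolding top_row_def by simp
  have nb: "int n + 1 \<notin> bot_row n j" unfolding bot_row_def by simp
  have x1: "int n + 1 \<notin> fst ` AA \<alpha> n j" using nt unfolding AA_def by force
  have y1: "int n + 1 \<notin> snd ` (AA \<alpha> n j \<union> {int n + 1} \<times> bot_row n j)"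
    using nb unfolding AA_def by force
  have X1: "finite (top_row \<alpha> n j \<union> {int n + 1})" using fin_top by auto
  have X2: "fst ` (AA \<alpha> n j \<union> {int n + 1} \<times> bot_row n j) \<subseteq> top_row \<alpha> n j \<union> {int n + 1}"
    unfolding AA_def by auto
  have Y2: "snd ` AA \<alpha> n j \<subseteq> bot_row n j" unfolding AA_def by auto
  show "dd \<alpha> j n 0 = cc \<alpha> j n 0" unfolding dd_def cc_def by (rule pmc_top0[OF fin_AA x1 fin_bot])
  show "dd \<alpha> j n (Suc e) = cc \<alpha> j n (Suc e) + (j + n - e) * cc \<alpha> j n e"
    unfolding dd_def cc_def pmc_top[OF fin_AA x1 fin_bot Y2] card_bot ..
  show "cc \<alpha> j (Suc n) 0 = cc \<alpha> j n 0"
    unfolding cc_def AA_Suc pmc_bot0[OF f1 X1] using pmc_top0[OF fin_AA x1 fin_bot] .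
  show "cc \<alpha> j (Suc n) (Suc e) = dd \<alpha> j n (Suc e) + (\<alpha> + j + n + 1 - e) * dd \<alpha> j n e"
    unfolding cc_def AA_Suc pmc_bot[OF f1 y1 X1 X2] card_top1 dd_def ..
qed


lemma Mot_fst: "ss \<in> Mot n j l \<Longrightarrow> i \<le> n \<Longrightarrow> fst (ss ! i) = int i"
proof (induction i)
  case 0 then show ?case by (simp add: Mot_def)
next
  case (Suc i)
  then have "fst (ss ! i) = int i" by simp
  moreover have "motzkin_step (ss ! i) (ss ! Suc i)" using Suc.prems by (simp add: Mot_def)
  ultimately show ?case unfolding motzkin_step_def by auto
qed

lemma Mot_0: "Mot 0 j l = (if l = j then {[(0, int j)]} else {})"
proof -
  have "ss \<in> Mot 0 j l \<longleftrightarrow> l = j \<and> ss = [(0, int j)]" for ss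
  proof
    assume "ss \<in> Mot 0 j l"
    then have "length ss = 1" "ss ! 0 = (0, int j)" "ss ! 0 = (0, int l)" by (auto simp: Mot_def)
    then show "l = j \<and> ss = [(0, int j)]" by (cases ss) auto
  next
    assume "l = j \<and> ss = [(0, int j)]"
    then show "ss \<in> Mot 0 j l" by (auto simp: Mot_def)
  qed
  then show ?thesis by auto
qed

definition nbr :: "nat \<Rightarrow> nat set" where
  "nbr l = {l'. l = l' \<or> l = Suc l' \<or> l' = Suc l}"

lemma step_nbr: "motzkin_step (int n, int l') (int (Suc n), int l) \<longleftrightarrow> l' \<in> nbr l"
  unfolding motzkin_step_def nbr_def by auto

lemma Mot_Suc: "Mot (Suc n) j l = (\<Union>l'\<in>nbr l. (\<lambda>ys. ys @ [(int (Suc n), int l)]) ` Mot n j l')"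
proof (rule set_eqI, rule iffI)
  fix ss assume ss: "ss \<in> Mot (Suc n) j l"
  define l' where "l' = nat (snd (ss ! n))"
  define ys where "ys = butlast ss"
  have len: "length ss = Suc (Suc n)" using ss by (simp add: Mot_def)
  have sn0: "snd (ss ! n) \<ge> 0" using ss unfolding Mot_def by simp
  have sn: "ss ! n = (int n, int l')"
    using Mot_fst[OF ss, of n] sn0 unfolding l'_def by (cases "ss ! n") auto
  have sl: "ss ! Suc n = (int (Suc n), int l)" using ss by (simp add: Mot_def)
  have ysi: "ys ! i = ss ! i" if "i < Suc n" for i
    unfolding ys_def using that len by (simp add: nth_butlast)
  have ssys: "ss = ys @ [(int (Suc n), int l)]"
  proof -
    have "ss = butlast ss @ [last ss]" using len by (metis append_butlast_last_id list.size(3) nat.distinct(1))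
    moreover have "last ss = ss ! Suc n" using len by (metis diff_Suc_1 last_conv_nth list.size(3) nat.distinct(1))
    ultimately show ?thesis using sl ys_def by simp
  qed
  have lenys: "length ys = Suc n" using len ys_def by simp
  have "ys \<in> Mot n j l'"
    unfolding Mot_def using ss sn lenys ysi by (auto simp: Mot_def)
  moreover have "l' \<in> nbr l"
  proof -
    have "motzkin_step (ss ! n) (ss ! Suc n)" using ss unfolding Mot_def by blast
    then show ?thesis using sn sl step_nbr by simp
  qed
  ultimately show "ss \<in> (\<Union>l'\<in>nbr l. (\<lambda>ys. ys @ [(int (Suc n), int l)]) ` Mot n j l')"
    using ssys by blast
next
  fix ss assume "ss \<in> (\<Union>l'\<in>nbr l. (\<lambda>ys. ys @ [(int (Suc n), int l)]) ` Mot n j l')"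
  then obtain l' ys where l': "l' \<in> nbr l" and ys: "ys \<in> Mot n j l'" and ss: "ss = ys @ [(int (Suc n), int l)]"
    by auto
  have lenys: "length ys = Suc n" using ys by (simp add: Mot_def)
  have ssi: "ss ! i = ys ! i" if "i \<le> n" for i using that lenys ss by (simp add: nth_append)
  have ssl: "ss ! Suc n = (int (Suc n), int l)" using lenys ss by (simp add: nth_append)
  have "length ss = Suc n + 1" using lenys ss by simp
  moreover have "ss ! 0 = (0, int j)" using ssi[of 0] ys by (simp add: Mot_def)
  moreover have "\<forall>i\<le>Suc n. snd (ss ! i) \<ge> 0"
  proof (intro allI impI)
    fix i assume "i \<le> Suc n"
    then show "snd (ss ! i) \<ge> 0"
      using ssi[of i] ssl ys unfolding Mot_def by (cases "i = Suc n") auto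
  qed
  moreover have "\<forall>i<Suc n. motzkin_step (ss ! i) (ss ! Suc i)"
  proof (intro allI impI)
    fix i assume i: "i < Suc n"
    show "motzkin_step (ss ! i) (ss ! Suc i)"
    proof (cases "i = n")
      case True
      have "ys ! n = (int n, int l')" using ys by (simp add: Mot_def)
      then show ?thesis using True ssi[of n] ssl l' step_nbr by simp
    next
      case False
      then show ?thesis using i ssi[of i] ssi[of "Suc i"] ys unfolding Mot_def by auto
    qed
  qed
  ultimately show "ss \<in> Mot (Suc n) j l" using ssl by (simp add: Mot_def)
qed

lemma wt_snoc:
  assumes "length ys = Suc n"
  shows "wt b lam (ys @ [p]) = wt b lam ys * step_wt b lam (ys ! n) p"
proof -
  have "wt b lam (ys @ [p]) = (\<Prod>i<Suc n. step_wt b lam ((ys @ [p]) ! i) ((ys @ [p]) ! Suc i))"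
    unfolding wt_def using assms by simp
  also have "\<dots> = (\<Prod>i<n. step_wt b lam ((ys @ [p]) ! i) ((ys @ [p]) ! Suc i)) * step_wt b lam (ys ! n) p"
    using assms by (simp add: nth_append)
  also have "(\<Prod>i<n. step_wt b lam ((ys @ [p]) ! i) ((ys @ [p]) ! Suc i)) = wt b lam ys"
    unfolding wt_def using assms by (intro prod.cong) (auto simp: nth_append)
  finally show ?thesis .
qed

lemma finite_Mot: "finite (Mot n j l)"
proof (induction n arbitrary: l)
  case 0 then show ?case by (simp add: Mot_0)
next
  case (Suc n)
  have "finite (nbr l)" by (rule finite_subset[of _ "{..Suc l}"]) (auto simp: nbr_def)
  then show ?case unfolding Mot_Suc using Suc by auto
qed

definition W :: "nat \<Rightarrow> nat \<Rightarrow> nat \<Rightarrow> nat \<Rightarrow> nat" where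
  "W \<alpha> j n l = (\<Sum>\<omega>\<in>Mot n j l. wt (\<lambda>n. 2 * n + \<alpha> + 1) (\<lambda>n. n * (n + \<alpha>)) \<omega>)"

lemma W_0: "W \<alpha> j 0 l = (if l = j then 1 else 0)"
  unfolding W_def Mot_0 by (simp add: wt_def)

lemma W_Suc_gen: "W \<alpha> j (Suc n) l = (\<Sum>l'\<in>nbr l. W \<alpha> j n l' * step_wt (\<lambda>n. 2 * n + \<alpha> + 1) (\<lambda>n. n * (n + \<alpha>)) (int n, int l') (int (Suc n), int l))"
proof -
  let ?b = "(\<lambda>n::nat. 2 * n + \<alpha> + 1)" and ?lam = "(\<lambda>n::nat. n * (n + \<alpha>))"
  let ?g = "(\<lambda>ys. ys @ [(int (Suc n), int l)])"
  have fn: "finite (nbr l)" by (rule finite_subset[of _ "{..Suc l}"]) (auto simp: nbr_def)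
  have inj: "inj_on ?g X" for X by (rule inj_onI) simp
  have disj: "?g ` Mot n j l1 \<inter> ?g ` Mot n j l2 = {}" if "l1 \<noteq> l2" for l1 l2
  proof -
    { fix ys assume "ys \<in> Mot n j l1" "ys \<in> Mot n j l2"
      then have "ys ! n = (int n, int l1)" "ys ! n = (int n, int l2)" by (auto simp: Mot_def)
      then have False using that by simp }
    then show ?thesis by auto
  qed
  have "W \<alpha> j (Suc n) l = (\<Sum>l'\<in>nbr l. \<Sum>ss\<in>?g ` Mot n j l'. wt ?b ?lam ss)"
    unfolding W_def Mot_Suc
    by (rule sum.UNION_disjoint) (use fn finite_Mot disj in \<open>auto simp: pairwise_def\<close>)
  also have "\<dots> = (\<Sum>l'\<in>nbr l. \<Sum>ys\<in>Mot n j l'. wt ?b ?lam ys * step_wt ?b ?lam (int n, int l') (int (Suc n), int l))"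
  proof (rule sum.cong[OF refl])
    fix l' assume "l' \<in> nbr l"
    have "(\<Sum>ss\<in>?g ` Mot n j l'. wt ?b ?lam ss) = (\<Sum>ys\<in>Mot n j l'. wt ?b ?lam (?g ys))"
      by (subst sum.reindex[OF inj]) (simp add: o_def)
    also have "\<dots> = (\<Sum>ys\<in>Mot n j l'. wt ?b ?lam ys * step_wt ?b ?lam (int n, int l') (int (Suc n), int l))"
    proof (rule sum.cong[OF refl])
      fix ys assume ys: "ys \<in> Mot n j l'"
      then have L: "length ys = Suc n" and N: "ys ! n = (int n, int l')" by (auto simp: Mot_def)
      show "wt ?b ?lam (?g ys) = wt ?b ?lam ys * step_wt ?b ?lam (int n, int l') (int (Suc n), int l)"
        unfolding wt_snoc[OF L] N ..
    qed
    finally show "(\<Sum>ss\<in>?g ` Mot n j l'. wt ?b ?lam ss) = (\<Sum>ys\<in>Mot n j l'. wt ?b ?lam ys * step_wt ?b ?lam (int n, int l') (int (Suc n), int l))" .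
  qed
  also have "\<dots> = (\<Sum>l'\<in>nbr l. W \<alpha> j n l' * step_wt ?b ?lam (int n, int l') (int (Suc n), int l))"
    unfolding W_def by (simp add: sum_distrib_right)
  finally show ?thesis .
qed

lemma nbr_eq: "nbr l = (if l = 0 then {0, 1} else {l - 1, l, Suc l})"
  unfolding nbr_def by auto

lemma W_Suc: "W \<alpha> j (Suc n) l = (if l > 0 then W \<alpha> j n (l - 1) else 0) + (2 * l + \<alpha> + 1) * W \<alpha> j n l
   + (Suc l) * (Suc l + \<alpha>) * W \<alpha> j n (Suc l)"
proof (cases "l = 0")
  case True
  then show ?thesis unfolding W_Suc_gen nbr_eq by (simp add: step_wt_def)
next
  case False
  then have "l - 1 \<noteq> l" "l - 1 \<noteq> Suc l" "nat (1 + int l) = Suc l" "nat (int l) = l" by auto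
  then show ?thesis using False unfolding W_Suc_gen nbr_eq by (simp add: step_wt_def)
qed


lemma main_claim:
  "W \<alpha> j n l = (if l \<le> j + n then cc \<alpha> j n (j + n - l) else 0)"
proof (induction n arbitrary: l)
  case 0
  show ?case by (simp add: W_0 cc_0)
next
  case (Suc n)
  define m where "m = j + n"
  have IH: "W \<alpha> j n l' = (if l' \<le> m then cc \<alpha> j n (m - l') else 0)" for l'
    using Suc.IH m_def by simp
  have jn: "j + Suc n = Suc m" using m_def by simp
  have cb: "cc \<alpha> j n e = 0" if "e > m" for e using cc_big that m_def by simp
  show ?case unfolding jn W_Suc
  proof (cases "l \<le> m")
    case False
    show "(if 0 < l then W \<alpha> j n (l - 1) else 0) + (2 * l + \<alpha> + 1) * W \<alpha> j n l +
      Suc l * (Suc l + \<alpha>) * W \<alpha> j n (Suc l) =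
      (if l \<le> Suc m then cc \<alpha> j (Suc n) (Suc m - l) else 0)"
    proof (cases "l = Suc m")
      case True
      then show ?thesis using IH cc_Suc(1) by simp
    next
      case False2: False
      then have "\<not> l - 1 \<le> m" "\<not> l \<le> Suc m" using False by auto
      then show ?thesis using IH False by simp
    qed
  next
    case True
    define k where "k = m - l"
    have Sk: "Suc m - l = Suc k" using True k_def by simp
    have mk: "\<alpha> + j + n + 1 - k = \<alpha> + l + 1" "j + n - k = l" using True k_def m_def by auto
    have cS: "cc \<alpha> j (Suc n) (Suc k) = cc \<alpha> j n (Suc k) + l * cc \<alpha> j n k + (\<alpha> + l + 1) * dd \<alpha> j n k"
      using cc_Suc(2)[of \<alpha> j n k] cc_Suc(4)[of \<alpha> j n k] mk by simp
    have W1: "(if 0 < l then W \<alpha> j n (l - 1) else 0) = cc \<alpha> j n (Suc k)"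
    proof (cases "l = 0")
      case True
      then show ?thesis using cb[of "Suc k"] k_def by simp
    next
      case False
      then have "m - (l - 1) = Suc k" "l - 1 \<le> m" using True k_def by auto
      then show ?thesis using IH[of "l - 1"] False by simp
    qed
    have W2: "W \<alpha> j n l = cc \<alpha> j n k" using IH True k_def by simp
    show "(if 0 < l then W \<alpha> j n (l - 1) else 0) + (2 * l + \<alpha> + 1) * W \<alpha> j n l +
      Suc l * (Suc l + \<alpha>) * W \<alpha> j n (Suc l) =
      (if l \<le> Suc m then cc \<alpha> j (Suc n) (Suc m - l) else 0)"
    proof (cases "k = 0")
      case True
      then have "l = m" using k_def \<open>l \<le> m\<close> by simp
      then have "W \<alpha> j n (Suc l) = 0" using IH by simp
      moreover have "dd \<alpha> j n k = cc \<alpha> j n k" using True cc_Suc(3) by simp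
      ultimately show ?thesis using W1 W2 Sk cS \<open>l \<le> m\<close> by (simp add: algebra_simps)
    next
      case False
      then obtain k' where k': "k = Suc k'" by (cases k) auto
      have "Suc l \<le> m" "m - Suc l = k'" using k' k_def \<open>l \<le> m\<close> by auto
      then have W3: "W \<alpha> j n (Suc l) = cc \<alpha> j n k'" using IH by simp
      have "j + n - k' = Suc l" using k' k_def m_def \<open>l \<le> m\<close> by simp
      then have "dd \<alpha> j n k = cc \<alpha> j n k + Suc l * cc \<alpha> j n k'"
        using cc_Suc(4)[of \<alpha> j n k'] k' by simp
      then show ?thesis using W1 W2 W3 Sk cS \<open>l \<le> m\<close> by (simp add: algebra_simps)
    qed
  qed
qed

theorem lemma2p2:
  fixes \<alpha> p j :: nat
  shows "(\<Sum>\<omega>\<in>Mot p j j. wt (\<lambda>n. 2 * n + \<alpha> + 1) (\<lambda>n. n * (n + \<alpha>)) \<omega>)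
         = card (Mset_l \<alpha> p j p)"
proof -
  have "(\<Sum>\<omega>\<in>Mot p j j. wt (\<lambda>n. 2 * n + \<alpha> + 1) (\<lambda>n. n * (n + \<alpha>)) \<omega>) = W \<alpha> j p j"
    unfolding W_def ..
  also have "\<dots> = cc \<alpha> j p p" using main_claim[of \<alpha> j p j] by simp
  also have "\<dots> = card (Mset_l \<alpha> p j p)" unfolding cc_def pmc_def Mset_l_pm ..
  finally show ?thesis .
qed

thm_deps lemma2p2

end
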